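(* In the stochastic epidemic model described in the context, let $u(k)=K\,I(k)$ for all $k\ge0$ with a constant gain $\delta_{\max}/v_{\min}\le K\le (1-d_{\max})/v_{\max}$. Then for all $k\ge1$, with probability one, $$D(k)\le\begin{cases}\dfrac{d_{\max}I_0\left(1-(\delta_{\max}-Kv_{\min}+1)^k\right)}{Kv_{\min}-\delta_{\max}}, & \delta_{\max}<Kv_{\min},\\[2mm] d_{\max}I_0\,k, & \delta_{\max}=Kv_{\min}.\end{cases}$$
   Context: Time is indexed by days $k=0,1,2,\dots$. Let $(\delta(k))_{k\ge0}$, $(d_I(k))_{k\ge0}$, $(v(k))_{k\ge0}$ be three mutually independent sequences of random variables, each sequence i.i.d. in $k$, with $0\le \delta(k)\le \delta_{\max}$, $0\le d_I(k)\le d_{\max}$ where $d_{\max}<1$, and $0<v_{\min}\le v(k)\le v_{\max}\le 1$. Given a control sequence $u(k)$, the cases evolve by $S(k+1)=S(k)-\delta(k)I(k)$, $I(k+1)=(1+\delta(k))I(k)-v(k)u(k)-d_I(k)I(k)$, $R(k+1)=R(k)+v(k)u(k)$, $D(k+1)=D(k)+d_I(k)I(k)$, with $S(0)=S_0$, $I(0)=I_0>0$, $R(0)=D(0)=0$, $I_0\delta_{\max}<S_0$. *)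

theory Defs
  imports "HOL-Probability.Probability"
begin

datatype noise = Infect | Death | Vacc

text \<open>The joint family of all noise random variables, indexed by (sequence label, day).
  Mutual independence of the three i.i.d. sequences is expressed as independence of this family.\<close>
definition noise_family ::
  "(nat \<Rightarrow> 'a \<Rightarrow> real) \<Rightarrow> (nat \<Rightarrow> 'a \<Rightarrow> real) \<Rightarrow> (nat \<Rightarrow> 'a \<Rightarrow> real) \<Rightarrow> noise \<times> nat \<Rightarrow> 'a \<Rightarrow> real"
  where "noise_family dl dI v = (\<lambda>(j, k). case j of Infect \<Rightarrow> dl k | Death \<Rightarrow> dI k | Vacc \<Rightarrow> v k)"

end

theory Submission
  imports Defs
begin

theorem lemma8:
  fixes M :: "'a measure"
    and dl dI v :: "nat \<Rightarrow> 'a \<Rightarrow> real"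
    and S I R D u :: "nat \<Rightarrow> 'a \<Rightarrow> real"
    and dl_max d_max v_min v_max S0 I0 K :: real
  assumes "prob_space M"
    and indep: "prob_space.indep_vars M (\<lambda>_. borel) (noise_family dl dI v) UNIV"
    and iid_dl: "\<And>k. distr M borel (dl k) = distr M borel (dl 0)"
    and iid_dI: "\<And>k. distr M borel (dI k) = distr M borel (dI 0)"
    and iid_v: "\<And>k. distr M borel (v k) = distr M borel (v 0)"
    and dl_bnd: "\<And>k \<omega>. \<omega> \<in> space M \<Longrightarrow> 0 \<le> dl k \<omega> \<and> dl k \<omega> \<le> dl_max"
    and dI_bnd: "\<And>k \<omega>. \<omega> \<in> space M \<Longrightarrow> 0 \<le> dI k \<omega> \<and> dI k \<omega> \<le> d_max"
    and d_max_lt: "d_max < 1"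
    and v_bnd: "\<And>k \<omega>. \<omega> \<in> space M \<Longrightarrow> v_min \<le> v k \<omega> \<and> v k \<omega> \<le> v_max"
    and v_min_pos: "0 < v_min" and v_max_le: "v_max \<le> 1"
    and S_0: "\<And>\<omega>. S 0 \<omega> = S0" and I_0: "\<And>\<omega>. I 0 \<omega> = I0"
    and R_0: "\<And>\<omega>. R 0 \<omega> = 0" and D_0: "\<And>\<omega>. D 0 \<omega> = 0"
    and I0_pos: "I0 > 0" and init: "I0 * dl_max < S0"
    and S_step: "\<And>k \<omega>. S (Suc k) \<omega> = S k \<omega> - dl k \<omega> * I k \<omega>"
    and I_step: "\<And>k \<omega>. I (Suc k) \<omega> = (1 + dl k \<omega>) * I k \<omega> - v k \<omega> * u k \<omega> - dI k \<omega> * I k \<omega>"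
    and R_step: "\<And>k \<omega>. R (Suc k) \<omega> = R k \<omega> + v k \<omega> * u k \<omega>"
    and D_step: "\<And>k \<omega>. D (Suc k) \<omega> = D k \<omega> + dI k \<omega> * I k \<omega>"
    and control: "\<And>k \<omega>. u k \<omega> = K * I k \<omega>"
    and K_lo: "dl_max / v_min \<le> K" and K_hi: "K \<le> (1 - d_max) / v_max"
  shows "\<forall>k\<ge>1. AE \<omega> in M.
           (dl_max < K * v_min \<longrightarrow>
              D k \<omega> \<le> d_max * I0 * (1 - (dl_max - K * v_min + 1) ^ k) / (K * v_min - dl_max))
         \<and> (dl_max = K * v_min \<longrightarrow> D k \<omega> \<le> d_max * I0 * real k)"
proof -
  interpret P: prob_space M by fact
  define q where "q = dl_max - K * v_min + 1"
  have key: "\<And>k. 0 \<le> I k \<omega> \<and> I k \<omega> \<le> I0 * q ^ k \<and> D k \<omega> \<le> d_max * I0 * (\<Sum>j<k. q ^ j)"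
    if om: "\<omega> \<in> space M" for \<omega>
  proof -
    have dm0: "0 \<le> d_max" using dI_bnd[OF om, of 0] by linarith
    have dl0: "0 \<le> dl_max" using dl_bnd[OF om, of 0] by linarith
    have K0: "0 \<le> K" using K_lo dl0 v_min_pos by (metis divide_nonneg_pos order_trans)
    have vmx: "0 < v_max" using v_bnd[OF om, of 0] v_min_pos by linarith
    have Kv: "K * v_max \<le> 1 - d_max" using K_hi vmx by (simp add: pos_le_divide_eq)
    have c_lo: "0 \<le> 1 + dl k \<omega> - v k \<omega> * K - dI k \<omega>" for k
    proof -
      have "v k \<omega> * K \<le> v_max * K" using v_bnd[OF om, of k] K0 by (simp add: mult_right_mono)
      thus ?thesis using Kv dl_bnd[OF om, of k] dI_bnd[OF om, of k] by (simp add: mult.commute)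
    qed
    have c_hi: "1 + dl k \<omega> - v k \<omega> * K - dI k \<omega> \<le> q" for k
    proof -
      have "v_min * K \<le> v k \<omega> * K" using v_bnd[OF om, of k] K0 by (simp add: mult_right_mono)
      thus ?thesis unfolding q_def using dl_bnd[OF om, of k] dI_bnd[OF om, of k] by (simp add: mult.commute)
    qed
    have Is: "I (Suc k) \<omega> = (1 + dl k \<omega> - v k \<omega> * K - dI k \<omega>) * I k \<omega>" for k
      using I_step[of k \<omega>] control[of k \<omega>] by (simp add: algebra_simps)
    show "0 \<le> I k \<omega> \<and> I k \<omega> \<le> I0 * q ^ k \<and> D k \<omega> \<le> d_max * I0 * (\<Sum>j<k. q ^ j)" for k
    proof (induction k)
      case 0
      then show ?case using I_0 D_0 I0_pos by simp
    next
      case (Suc k)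
      have i0: "0 \<le> I k \<omega>" and i1: "I k \<omega> \<le> I0 * q ^ k" and d1: "D k \<omega> \<le> d_max * I0 * (\<Sum>j<k. q ^ j)"
        using Suc by auto
      have "0 \<le> I (Suc k) \<omega>" using Is c_lo i0 using mult_nonneg_nonneg by metis
      moreover have "I (Suc k) \<omega> \<le> I0 * q ^ Suc k"
      proof -
        have "I (Suc k) \<omega> \<le> q * I k \<omega>" using Is c_hi i0 by (metis mult_right_mono)
        also have "\<dots> \<le> q * (I0 * q ^ k)" using i1 c_lo[of k] c_hi[of k] by (intro mult_left_mono) (simp, linarith)
        finally show ?thesis by (simp add: algebra_simps)
      qed
      moreover have "D (Suc k) \<omega> \<le> d_max * I0 * (\<Sum>j<Suc k. q ^ j)"
      proof -
        have "dI k \<omega> * I k \<omega> \<le> d_max * (I0 * q ^ k)"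
          using dI_bnd[OF om, of k] i0 i1 dm0 by (intro mult_mono) auto
        thus ?thesis using D_step[of k \<omega>] d1 by (simp add: algebra_simps)
      qed
      ultimately show ?case by blast
    qed
  qed
  show ?thesis
  proof (intro allI impI AE_I2 conjI)
    fix k :: nat and \<omega> assume om: "\<omega> \<in> space M"
    have D: "D k \<omega> \<le> d_max * I0 * (\<Sum>j<k. q ^ j)" using key[OF om] by blast
    { assume "dl_max < K * v_min"
      hence q1: "q \<noteq> 1" and q2: "K * v_min - dl_max = 1 - q" unfolding q_def by auto
      have "(\<Sum>j<k. q ^ j) = (1 - q ^ k) / (1 - q)"
        using geometric_sum[OF q1, of k] q1 by (simp add: field_simps)
      hence D2: "D k \<omega> \<le> d_max * I0 * ((1 - q ^ k) / (1 - q))" using D by simp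
      have qq: "dl_max - K * v_min + 1 = q" by (simp add: q_def)
      show "D k \<omega> \<le> d_max * I0 * (1 - (dl_max - K * v_min + 1) ^ k) / (K * v_min - dl_max)"
        unfolding qq q2 using D2 by (simp only: times_divide_eq_right) }
    { assume "dl_max = K * v_min"
      hence "q = 1" unfolding q_def by simp
      thus "D k \<omega> \<le> d_max * I0 * real k" using D by simp }
  qed
qed

end
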